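(* Let $s=\tfrac12$, $\lambda\in\mathbb{C}$ and $k\in\mathbb{Z}\setminus\{0\}$. Every even superderivation of $\mathfrak{L}^{1/2}_\lambda$ of degree $k$ is inner; more precisely, it equals $\mathrm{ad}(aL_k+bI_k)$ for some $a,b\in\mathbb{C}$.
   Context: For $s\in\{0,\tfrac12\}$ and $\lambda\in\mathbb{C}$, $\mathfrak{L}^s_\lambda$ is the complex Lie superalgebra with basis $\{L_m,I_m,G_p,H_p : m\in\mathbb{Z},\ p\in s+\mathbb{Z}\}$, even part spanned by the $L_m,I_m$, odd part spanned by the $G_p,H_p$, and brackets $[L_m,L_n]=(m-n)L_{m+n}$, $[L_m,I_n]=(m-n)I_{m+n}$, $[L_m,H_p]=(\tfrac m2-p)H_{m+p}$, $[L_m,G_p]=(\tfrac m2-p)G_{m+p}+\lambda(m+1)H_{m+p}$, $[I_m,G_p]=(m-2p)H_{m+p}$, $[G_p,G_q]=I_{p+q}$, plus those given by super-antisymmetry $[y,x]=-(-1)^{|x||y|}[x,y]$; all other brackets of basis elements are zero. $\mathfrak{L}_r$ ($r\in\tfrac12\mathbb{Z}$) is spanned by basis elements of index $r$. A superderivation of parity $a$ is a linear map $D$ shifting parity by $a$ with $D([x,y])=[D(x),y]+(-1)^{a|x|}[x,D(y)]$ for homogeneous $x,y$; it has degree $r$ if $D(\mathfrak{L}_q)\subset\mathfrak{L}_{q+r}$. $\mathrm{ad}\,x(y)=[x,y]$. *)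

theory Defs
  imports Complex_Main
begin

text \<open>The Lie superalgebra L^{1/2}_lambda.  Basis elements: L m, I m (m integer),
  and G j, H j standing for G_{j+1/2}, H_{j+1/2} (j integer), since s = 1/2.\<close>

datatype basis = L int | I int | G int | H int

type_synonym elt = "basis \<Rightarrow> complex"

definition supp :: "elt \<Rightarrow> basis set" where
  "supp x = {b. x b \<noteq> 0}"

definition Alg :: "elt set" where
  "Alg = {x. finite (supp x)}"

definition sgl :: "basis \<Rightarrow> elt" where
  "sgl b = (\<lambda>c. if c = b then 1 else 0)"

definition halfp :: "int \<Rightarrow> complex" where
  "halfp j = of_int j + 1/2"

fun br :: "complex \<Rightarrow> basis \<Rightarrow> basis \<Rightarrow> elt" where
  "br lam (L m) (L n) = (\<lambda>c. of_int (m - n) * sgl (L (m + n)) c)"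
| "br lam (L m) (I n) = (\<lambda>c. of_int (m - n) * sgl (I (m + n)) c)"
| "br lam (I n) (L m) = (\<lambda>c. - (of_int (m - n) * sgl (I (m + n)) c))"
| "br lam (L m) (H j) = (\<lambda>c. (of_int m / 2 - halfp j) * sgl (H (m + j)) c)"
| "br lam (H j) (L m) = (\<lambda>c. - ((of_int m / 2 - halfp j) * sgl (H (m + j)) c))"
| "br lam (L m) (G j) = (\<lambda>c. (of_int m / 2 - halfp j) * sgl (G (m + j)) c
                              + lam * (of_int m + 1) * sgl (H (m + j)) c)"
| "br lam (G j) (L m) = (\<lambda>c. - ((of_int m / 2 - halfp j) * sgl (G (m + j)) c
                              + lam * (of_int m + 1) * sgl (H (m + j)) c))"
| "br lam (I m) (G j) = (\<lambda>c. (of_int m - 2 * halfp j) * sgl (H (m + j)) c)"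
| "br lam (G j) (I m) = (\<lambda>c. - ((of_int m - 2 * halfp j) * sgl (H (m + j)) c))"
| "br lam (G j1) (G j2) = sgl (I (j1 + j2 + 1))"
| "br lam x y = (\<lambda>c. 0)"

definition bracket :: "complex \<Rightarrow> elt \<Rightarrow> elt \<Rightarrow> elt" where
  "bracket lam x y = (\<lambda>c. \<Sum>b1\<in>supp x. \<Sum>b2\<in>supp y. x b1 * y b2 * br lam b1 b2 c)"

fun is_even :: "basis \<Rightarrow> bool" where
  "is_even (L m) = True" | "is_even (I m) = True"
| "is_even (G j) = False" | "is_even (H j) = False"

definition EvenPart :: "elt set" where
  "EvenPart = {x \<in> Alg. \<forall>b. x b \<noteq> 0 \<longrightarrow> is_even b}"

definition OddPart :: "elt set" where
  "OddPart = {x \<in> Alg. \<forall>b. x b \<noteq> 0 \<longrightarrow> \<not> is_even b}"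

definition homogeneous :: "elt \<Rightarrow> bool" where
  "homogeneous x \<longleftrightarrow> x \<in> EvenPart \<or> x \<in> OddPart"

fun idx :: "basis \<Rightarrow> real" where
  "idx (L m) = of_int m" | "idx (I m) = of_int m"
| "idx (G j) = of_int j + 1/2" | "idx (H j) = of_int j + 1/2"

definition Grade :: "real \<Rightarrow> elt set" where
  "Grade r = {x \<in> Alg. \<forall>b. x b \<noteq> 0 \<longrightarrow> idx b = r}"

definition linear_on_Alg :: "(elt \<Rightarrow> elt) \<Rightarrow> bool" where
  "linear_on_Alg D \<longleftrightarrow> (\<forall>x\<in>Alg. D x \<in> Alg)
     \<and> (\<forall>x\<in>Alg. \<forall>y\<in>Alg. D (\<lambda>b. x b + y b) = (\<lambda>b. D x b + D y b))
     \<and> (\<forall>x\<in>Alg. \<forall>c::complex. D (\<lambda>b. c * x b) = (\<lambda>b. c * D x b))"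

text \<open>Even superderivation: linear, parity preserving, and D[x,y] = [Dx,y] + [x,Dy]
  for homogeneous x, y (the sign (-1)^{0*|x|} is 1).\<close>
definition even_superderivation :: "complex \<Rightarrow> (elt \<Rightarrow> elt) \<Rightarrow> bool" where
  "even_superderivation lam D \<longleftrightarrow> linear_on_Alg D
     \<and> (\<forall>x\<in>EvenPart. D x \<in> EvenPart) \<and> (\<forall>x\<in>OddPart. D x \<in> OddPart)
     \<and> (\<forall>x y. homogeneous x \<longrightarrow> homogeneous y \<longrightarrow>
          D (bracket lam x y) = (\<lambda>c. bracket lam (D x) y c + bracket lam x (D y) c))"

definition has_degree :: "(elt \<Rightarrow> elt) \<Rightarrow> real \<Rightarrow> bool" where
  "has_degree D r \<longleftrightarrow> (\<forall>q. \<forall>x\<in>Grade q. D x \<in> Grade (q + r))"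

end

theory Submission
  imports Defs
begin

lemma supp_sgl[simp]: "supp (sgl b) = {b}"
  by (auto simp: supp_def sgl_def)

lemma sgl_Alg[simp]: "sgl b \<in> Alg"
  by (simp add: Alg_def)

lemma sgl_hom: "homogeneous (sgl b)"
  using sgl_Alg[of b] by (cases b) (auto simp: homogeneous_def EvenPart_def OddPart_def sgl_def)

lemma sgl_Grade: "sgl b \<in> Grade (idx b)"
  using sgl_Alg[of b] by (auto simp: Grade_def sgl_def split: if_splits)

lemma bracket_fin:
  assumes "finite A" "finite B" "supp x \<subseteq> A" "supp y \<subseteq> B"
  shows "bracket lam x y c = (\<Sum>b1\<in>A. \<Sum>b2\<in>B. x b1 * y b2 * br lam b1 b2 c)"
proof -
  have fy: "finite (supp y)" using assms finite_subset by blast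
  have fx: "finite (supp x)" using assms finite_subset by blast
  have 1: "\<And>b1. (\<Sum>b2\<in>supp y. x b1 * y b2 * br lam b1 b2 c) = (\<Sum>b2\<in>B. x b1 * y b2 * br lam b1 b2 c)"
    by (rule sum.mono_neutral_left) (use assms fy in \<open>auto simp: supp_def\<close>)
  have "bracket lam x y c = (\<Sum>b1\<in>supp x. \<Sum>b2\<in>B. x b1 * y b2 * br lam b1 b2 c)"
    unfolding bracket_def using 1 by simp
  also have "\<dots> = (\<Sum>b1\<in>A. \<Sum>b2\<in>B. x b1 * y b2 * br lam b1 b2 c)"
    by (rule sum.mono_neutral_left) (use assms fx in \<open>auto simp: supp_def\<close>)
  finally show ?thesis .
qed

lemma supp2: "supp (\<lambda>c. p * sgl B1 c + q * sgl B2 c) \<subseteq> {B1, B2}"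
  by (auto simp: supp_def sgl_def)

lemma supp_sgl_sub: "supp (sgl b) \<subseteq> {b}" by simp

lemma br_sgl: "bracket lam (sgl b1) (sgl b2) = br lam b1 b2"
proof
  fix c
  show "bracket lam (sgl b1) (sgl b2) c = br lam b1 b2 c"
    by (subst bracket_fin[OF _ _ supp_sgl_sub supp_sgl_sub]) (auto simp: sgl_def)
qed

lemma br2: assumes "B1 \<noteq> B2"
  shows "bracket lam (\<lambda>c. p * sgl B1 c + q * sgl B2 c) (sgl B3) x = p * br lam B1 B3 x + q * br lam B2 B3 x"
  using assms by (subst bracket_fin[OF _ _ supp2 supp_sgl_sub]) (auto simp: sgl_def)

lemma br2': assumes "B1 \<noteq> B2"
  shows "bracket lam (sgl B3) (\<lambda>c. p * sgl B1 c + q * sgl B2 c) x = p * br lam B3 B1 x + q * br lam B3 B2 x"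
  using assms by (subst bracket_fin[OF _ _ supp_sgl_sub supp2]) (auto simp: sgl_def)

lemma even_form:
  assumes "x \<in> EvenPart" "x \<in> Grade (of_int n)"
  shows "x = (\<lambda>c. x (L n) * sgl (L n) c + x (I n) * sgl (I n) c)"
proof
  fix c show "x c = x (L n) * sgl (L n) c + x (I n) * sgl (I n) c"
  proof (cases "x c = 0")
    case True then show ?thesis by (cases c) (auto simp: sgl_def)
  next
    case False
    then have "is_even c" "idx c = of_int n" using assms by (auto simp: EvenPart_def Grade_def)
    then show ?thesis by (cases c) (auto simp: sgl_def)
  qed
qed

lemma odd_form:
  assumes "x \<in> OddPart" "x \<in> Grade (of_int n + 1/2)"
  shows "x = (\<lambda>c. x (G n) * sgl (G n) c + x (H n) * sgl (H n) c)"
proof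
  fix c show "x c = x (G n) * sgl (G n) c + x (H n) * sgl (H n) c"
  proof (cases "x c = 0")
    case True then show ?thesis by (cases c) (auto simp: sgl_def)
  next
    case False
    then have "\<not> is_even c" "idx c = of_int n + 1/2" using assms by (auto simp: OddPart_def Grade_def)
    then show ?thesis by (cases c) (auto simp: sgl_def)
  qed
qed

lemma sum_Alg: "finite S \<Longrightarrow> (\<lambda>c. \<Sum>b\<in>S. f b * sgl b c) \<in> Alg"
proof -
  assume S: "finite S"
  have "supp (\<lambda>c. \<Sum>b\<in>S. f b * sgl b c) \<subseteq> S"
  proof
    fix c assume "c \<in> supp (\<lambda>c. \<Sum>b\<in>S. f b * sgl b c)"
    then have "(\<Sum>b\<in>S. f b * sgl b c) \<noteq> 0" by (simp add: supp_def)
    then obtain b where "b \<in> S" "f b * sgl b c \<noteq> 0" using sum.neutral[of S "\<lambda>b. f b * sgl b c"] by auto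
    then show "c \<in> S" by (auto simp: sgl_def split: if_splits)
  qed
  then show ?thesis using S by (simp add: Alg_def finite_subset)
qed

lemma D_sum:
  assumes lin: "linear_on_Alg D" and S: "finite S"
  shows "D (\<lambda>c. \<Sum>b\<in>S. f b * sgl b c) = (\<lambda>c. \<Sum>b\<in>S. f b * D (sgl b) c)"
  using S
proof (induction S rule: finite_induct)
  case empty
  have z: "(\<lambda>c::basis. 0::complex) \<in> Alg" by (simp add: Alg_def supp_def)
  have h0: "\<forall>x\<in>Alg. \<forall>c. D (\<lambda>b. c * x b) = (\<lambda>b. c * D x b)"
    using lin[unfolded linear_on_Alg_def] by blast
  show ?case using h0[rule_format, OF z, of 0] by simp
next
  case (insert s S)
  have h: "D (\<lambda>b. f s * sgl s b) = (\<lambda>b. f s * D (sgl s) b)"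
    using lin unfolding linear_on_Alg_def by auto
  have a1: "(\<lambda>c. f s * sgl s c) \<in> Alg"
    using sum_Alg[of "{s}" f] by simp
  have a2: "(\<lambda>c. \<Sum>b\<in>S. f b * sgl b c) \<in> Alg" using sum_Alg insert by blast
  have "D (\<lambda>c. \<Sum>b\<in>insert s S. f b * sgl b c) = D (\<lambda>c. f s * sgl s c + (\<Sum>b\<in>S. f b * sgl b c))"
    using insert by simp
  also have "\<dots> = (\<lambda>c. D (\<lambda>c. f s * sgl s c) c + D (\<lambda>c. \<Sum>b\<in>S. f b * sgl b c) c)"
  proof -
    have ha: "\<forall>x\<in>Alg. \<forall>y\<in>Alg. D (\<lambda>b. x b + y b) = (\<lambda>b. D x b + D y b)"
      using lin[unfolded linear_on_Alg_def] by blast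
    show ?thesis using ha[rule_format, OF a1 a2] by simp
  qed
  also have "\<dots> = (\<lambda>c. \<Sum>b\<in>insert s S. f b * D (sgl b) c)"
    using insert h by simp
  finally show ?case .
qed

lemma Alg_decomp: "x \<in> Alg \<Longrightarrow> x = (\<lambda>c. \<Sum>b\<in>supp x. x b * sgl b c)"
proof
  fix c assume "x \<in> Alg"
  then have f: "finite (supp x)" by (simp add: Alg_def)
  have "(\<Sum>b\<in>supp x. x b * sgl b c) = (\<Sum>b\<in>supp x. if b = c then x b else 0)"
    by (rule sum.cong) (auto simp: sgl_def)
  also have "\<dots> = x c" using f by (simp add: sum.delta' supp_def)
  finally show "x c = (\<Sum>b\<in>supp x. x b * sgl b c)" by simp
qed



lemma scal_Alg: "(\<lambda>c. t * sgl B c) \<in> Alg"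
proof -
  have "supp (\<lambda>c. t * sgl B c) \<subseteq> {B}" by (auto simp: supp_def sgl_def)
  then show ?thesis by (simp add: Alg_def finite_subset)
qed

lemma bracket_right_lin:
  assumes "finite A" "supp Y \<subseteq> A" "x \<in> Alg"
  shows "bracket lam Y x c = (\<Sum>b\<in>supp x. x b * bracket lam Y (sgl b) c)"
proof -
  have fx: "finite (supp x)" using assms by (simp add: Alg_def)
  have 1: "bracket lam Y x c = (\<Sum>b1\<in>A. \<Sum>b2\<in>supp x. Y b1 * x b2 * br lam b1 b2 c)"
    by (rule bracket_fin) (use assms fx in auto)
  have 2: "\<And>b. bracket lam Y (sgl b) c = (\<Sum>b1\<in>A. Y b1 * br lam b1 b c)"
    by (subst bracket_fin[OF assms(1) _ assms(2) supp_sgl_sub]) (auto simp: sgl_def)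
  show ?thesis unfolding 1 2 sum_distrib_left
    by (subst sum.swap) (simp add: ac_simps)
qed

theorem lemma2p6:
  fixes lam :: complex and k :: int and D :: "elt \<Rightarrow> elt"
  assumes "k \<noteq> 0"
    and "even_superderivation lam D"
    and "has_degree D (of_int k)"
  shows "\<exists>a b :: complex. \<forall>x\<in>Alg.
           D x = bracket lam (\<lambda>c. a * sgl (L k) c + b * sgl (I k) c) x"
proof -
  have lin: "linear_on_Alg D" and ev: "\<forall>x\<in>EvenPart. D x \<in> EvenPart" and od: "\<forall>x\<in>OddPart. D x \<in> OddPart"
   and der: "\<forall>x y. homogeneous x \<longrightarrow> homogeneous y \<longrightarrow> D (bracket lam x y) = (\<lambda>c. bracket lam (D x) y c + bracket lam x (D y) c)"
    using assms(2) unfolding even_superderivation_def by blast+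
  have hsc: "\<And>x c. x \<in> Alg \<Longrightarrow> D (\<lambda>b. c * x b) = (\<lambda>b. c * D x b)"
    using lin unfolding linear_on_Alg_def by blast
  have hadd: "\<And>x y. x \<in> Alg \<Longrightarrow> y \<in> Alg \<Longrightarrow> D (\<lambda>b. x b + y b) = (\<lambda>b. D x b + D y b)"
    using lin unfolding linear_on_Alg_def by blast
  have deg: "\<And>x q. x \<in> Grade q \<Longrightarrow> D x \<in> Grade (q + of_int k)"
    using assms(3) unfolding has_degree_def by blast
  have kne: "(of_int k :: complex) \<noteq> 0" using assms(1) by simp
  have evL: "\<And>m. sgl (L m) \<in> EvenPart" and evI: "\<And>m. sgl (I m) \<in> EvenPart"
    using sgl_Alg by (auto simp: EvenPart_def sgl_def)
  have odG: "\<And>m. sgl (G m) \<in> OddPart" and odH: "\<And>m. sgl (H m) \<in> OddPart"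
    using sgl_Alg by (auto simp: OddPart_def sgl_def)
  have gL: "\<And>m. D (sgl (L m)) \<in> Grade (of_int (m + k))" using deg[OF sgl_Grade[of "L m" for m]] by simp
  have gI: "\<And>m. D (sgl (I m)) \<in> Grade (of_int (m + k))" using deg[OF sgl_Grade[of "I m" for m]] by simp
  have gG: "\<And>m. D (sgl (G m)) \<in> Grade (of_int (m + k) + 1/2)" using deg[OF sgl_Grade[of "G m" for m]] by (simp add: algebra_simps)
  have gH: "\<And>m. D (sgl (H m)) \<in> Grade (of_int (m + k) + 1/2)" using deg[OF sgl_Grade[of "H m" for m]] by (simp add: algebra_simps)
  have fL: "\<And>m. D (sgl (L m)) = (\<lambda>c. D (sgl (L m)) (L (m+k)) * sgl (L (m+k)) c + D (sgl (L m)) (I (m+k)) * sgl (I (m+k)) c)"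
    by (rule even_form[OF ev[rule_format, OF evL] gL])
  have fI: "\<And>m. D (sgl (I m)) = (\<lambda>c. D (sgl (I m)) (L (m+k)) * sgl (L (m+k)) c + D (sgl (I m)) (I (m+k)) * sgl (I (m+k)) c)"
    by (rule even_form[OF ev[rule_format, OF evI] gI])
  have fG: "\<And>m. D (sgl (G m)) = (\<lambda>c. D (sgl (G m)) (G (m+k)) * sgl (G (m+k)) c + D (sgl (G m)) (H (m+k)) * sgl (H (m+k)) c)"
    by (rule odd_form[OF od[rule_format, OF odG] gG])
  have fH: "\<And>m. D (sgl (H m)) = (\<lambda>c. D (sgl (H m)) (G (m+k)) * sgl (G (m+k)) c + D (sgl (H m)) (H (m+k)) * sgl (H (m+k)) c)"
    by (rule odd_form[OF od[rule_format, OF odH] gH])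
  define \<alpha> where "\<alpha> = D (sgl (L 0)) (L k)"
  define \<beta> where "\<beta> = D (sgl (L 0)) (I k)"
  have E: "D (sgl (L 0)) = (\<lambda>c. \<alpha> * sgl (L k) c + \<beta> * sgl (I k) c)"
    using fL[of 0] by (simp add: \<alpha>_def \<beta>_def)
  define a where "a = \<alpha> / of_int k"
  define b where "b = \<beta> / of_int k"
  define Y where "Y = (\<lambda>c. a * sgl (L k) c + b * sgl (I k) c)"
  have key: "\<And>bb. D (bracket lam (sgl (L 0)) (sgl bb)) = (\<lambda>c. bracket lam (D (sgl (L 0))) (sgl bb) c + bracket lam (sgl (L 0)) (D (sgl bb)) c)"
    using der sgl_hom by blast
  have keyE: "\<And>bb c. D (br lam (L 0) bb) c = \<alpha> * br lam (L k) bb c + \<beta> * br lam (I k) bb c + bracket lam (sgl (L 0)) (D (sgl bb)) c"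
  proof -
    fix bb c
    show "D (br lam (L 0) bb) c = \<alpha> * br lam (L k) bb c + \<beta> * br lam (I k) bb c + bracket lam (sgl (L 0)) (D (sgl bb)) c"
      using fun_cong[OF key[of bb], of c] unfolding br_sgl E by (simp add: br2)
  qed
  have cL: "\<And>m. D (sgl (L m)) = bracket lam Y (sgl (L m))"
  proof -
    fix m
    define u where "u = D (sgl (L m)) (L (m+k))"
    define v where "v = D (sgl (L m)) (I (m+k))"
    have F: "D (sgl (L m)) = (\<lambda>c. u * sgl (L (m+k)) c + v * sgl (I (m+k)) c)" using fL[of m] u_def v_def by simp
    have B: "br lam (L 0) (L m) = (\<lambda>c. (- of_int m) * sgl (L m) c)" by (rule ext) simp
    have "D (\<lambda>c. (- of_int m) * sgl (L m) c) = (\<lambda>c. (- of_int m) * D (sgl (L m)) c)" by (rule hsc) simp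
    then have "\<And>c. D (br lam (L 0) (L m)) c = (- of_int m) * D (sgl (L m)) c" unfolding B by simp
    then have eq: "\<And>c. (- of_int m) * (u * sgl (L (m+k)) c + v * sgl (I (m+k)) c) = \<alpha> * br lam (L k) (L m) c + \<beta> * br lam (I k) (L m) c + (u * br lam (L 0) (L (m+k)) c + v * br lam (L 0) (I (m+k)) c)"
      using keyE[of "L m"] unfolding F by (simp add: br2')
    have "u * of_int k = \<alpha> * (of_int k - of_int m)" using eq[of "L (m+k)"]
      by (simp add: sgl_def ac_simps) (simp add: algebra_simps)
    then have e1: "u = a * (of_int k - of_int m)" using kne by (simp add: a_def field_simps)
    have "v * of_int k = \<beta> * (of_int k - of_int m)" using eq[of "I (m+k)"]
      by (simp add: sgl_def ac_simps) (simp add: algebra_simps)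
    then have e2: "v = b * (of_int k - of_int m)" using kne by (simp add: b_def field_simps)
    show "D (sgl (L m)) = bracket lam Y (sgl (L m))"
    proof
      fix c show "D (sgl (L m)) c = bracket lam Y (sgl (L m)) c"
        unfolding F Y_def by (simp add: br2) (simp add: e1 e2 sgl_def ac_simps algebra_simps)
    qed
  qed
  have hH: "\<And>j. D (sgl (H j)) = (\<lambda>c. (a * (of_int k / 2 - halfp j)) * sgl (H (j+k)) c)"
  proof -
    fix j
    define u where "u = D (sgl (H j)) (G (j+k))"
    define v where "v = D (sgl (H j)) (H (j+k))"
    have F: "D (sgl (H j)) = (\<lambda>c. u * sgl (G (j+k)) c + v * sgl (H (j+k)) c)" using fH[of j] u_def v_def by simp
    have B: "br lam (L 0) (H j) = (\<lambda>c. (- halfp j) * sgl (H j) c)" by (rule ext) simp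
    have "D (\<lambda>c. (- halfp j) * sgl (H j) c) = (\<lambda>c. (- halfp j) * D (sgl (H j)) c)" by (rule hsc) simp
    then have "\<And>c. D (br lam (L 0) (H j)) c = (- halfp j) * D (sgl (H j)) c" unfolding B by simp
    then have eq: "\<And>c. (- halfp j) * (u * sgl (G (j+k)) c + v * sgl (H (j+k)) c) = \<alpha> * br lam (L k) (H j) c + \<beta> * br lam (I k) (H j) c + (u * br lam (L 0) (G (j+k)) c + v * br lam (L 0) (H (j+k)) c)"
      using keyE[of "H j"] unfolding F by (simp add: br2')
    have "u * of_int k = 0" using eq[of "G (j+k)"]
      by (simp add: sgl_def ac_simps halfp_def)
    then have e1: "u = 0" using kne by simp
    have "v * of_int k = \<alpha> * (of_int k / 2 - halfp j)" using eq[of "H (j+k)"] e1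
      by (simp add: sgl_def ac_simps halfp_def) (simp add: algebra_simps)
    then have e2: "v = a * (of_int k / 2 - halfp j)" using kne by (simp add: a_def field_simps)
    show "D (sgl (H j)) = (\<lambda>c. (a * (of_int k / 2 - halfp j)) * sgl (H (j+k)) c)"
      unfolding F e1 e2 by simp
  qed
  have cH: "\<And>j. D (sgl (H j)) = bracket lam Y (sgl (H j))"
  proof
    fix j c show "D (sgl (H j)) c = bracket lam Y (sgl (H j)) c"
      unfolding hH Y_def by (simp add: br2) (simp add: sgl_def ac_simps)
  qed
  have cI: "\<And>m. D (sgl (I m)) = bracket lam Y (sgl (I m))"
  proof -
    fix m
    define u where "u = D (sgl (I m)) (L (m+k))"
    define v where "v = D (sgl (I m)) (I (m+k))"
    have F: "D (sgl (I m)) = (\<lambda>c. u * sgl (L (m+k)) c + v * sgl (I (m+k)) c)" using fI[of m] u_def v_def by simp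
    have B: "br lam (L 0) (I m) = (\<lambda>c. (- of_int m) * sgl (I m) c)" by (rule ext) simp
    have "D (\<lambda>c. (- of_int m) * sgl (I m) c) = (\<lambda>c. (- of_int m) * D (sgl (I m)) c)" by (rule hsc) simp
    then have "\<And>c. D (br lam (L 0) (I m)) c = (- of_int m) * D (sgl (I m)) c" unfolding B by simp
    then have eq: "\<And>c. (- of_int m) * (u * sgl (L (m+k)) c + v * sgl (I (m+k)) c) = \<alpha> * br lam (L k) (I m) c + \<beta> * br lam (I k) (I m) c + (u * br lam (L 0) (L (m+k)) c + v * br lam (L 0) (I (m+k)) c)"
      using keyE[of "I m"] unfolding F by (simp add: br2')
    have "u * of_int k = 0" using eq[of "L (m+k)"]
      by (simp add: sgl_def ac_simps) (auto simp: algebra_simps)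
    then have e1: "u = 0" using kne by simp
    have "v * of_int k = \<alpha> * (of_int k - of_int m)" using eq[of "I (m+k)"]
      by (simp add: sgl_def ac_simps) (simp add: algebra_simps)
    then have e2: "v = a * (of_int k - of_int m)" using kne by (simp add: a_def field_simps)
    show "D (sgl (I m)) = bracket lam Y (sgl (I m))"
    proof
      fix c show "D (sgl (I m)) c = bracket lam Y (sgl (I m)) c"
        unfolding F Y_def by (simp add: br2) (simp add: e1 e2 sgl_def ac_simps algebra_simps)
    qed
  qed
  have cG: "\<And>j. D (sgl (G j)) = bracket lam Y (sgl (G j))"
  proof -
    fix j
    define u where "u = D (sgl (G j)) (G (j+k))"
    define v where "v = D (sgl (G j)) (H (j+k))"
    have F: "D (sgl (G j)) = (\<lambda>c. u * sgl (G (j+k)) c + v * sgl (H (j+k)) c)" using fG[of j] u_def v_def by simp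
    have B: "br lam (L 0) (G j) = (\<lambda>c. (- halfp j) * sgl (G j) c + lam * sgl (H j) c)" by (rule ext) simp
    have "D (\<lambda>c. (- halfp j) * sgl (G j) c + lam * sgl (H j) c) = (\<lambda>c. D (\<lambda>c. (- halfp j) * sgl (G j) c) c + D (\<lambda>c. lam * sgl (H j) c) c)"
      by (rule hadd) (rule scal_Alg)+
    also have "\<dots> = (\<lambda>c. (- halfp j) * D (sgl (G j)) c + lam * D (sgl (H j)) c)"
      by (simp only: hsc[OF sgl_Alg])
    finally have "\<And>c. D (br lam (L 0) (G j)) c = (- halfp j) * D (sgl (G j)) c + lam * D (sgl (H j)) c" unfolding B by simp
    then have eq: "\<And>c. (- halfp j) * (u * sgl (G (j+k)) c + v * sgl (H (j+k)) c) + lam * ((a * (of_int k / 2 - halfp j)) * sgl (H (j+k)) c) = \<alpha> * br lam (L k) (G j) c + \<beta> * br lam (I k) (G j) c + (u * br lam (L 0) (G (j+k)) c + v * br lam (L 0) (H (j+k)) c)"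
      using keyE[of "G j"] unfolding F hH by (simp add: br2')
    have "u * of_int k = \<alpha> * (of_int k / 2 - halfp j)" using eq[of "G (j+k)"]
      by (simp add: sgl_def ac_simps halfp_def) (simp add: algebra_simps)
    then have e1: "u = a * (of_int k / 2 - halfp j)" using kne by (simp add: a_def field_simps)
    have "v * of_int k + lam * (a * (of_int k / 2 - halfp j)) = \<alpha> * lam * (of_int k + 1) + \<beta> * (of_int k - 2 * halfp j) + u * lam"
      using eq[of "H (j+k)"]
      by (simp add: sgl_def ac_simps halfp_def) (simp add: algebra_simps)
    then have "v * of_int k = \<alpha> * lam * (of_int k + 1) + \<beta> * (of_int k - 2 * halfp j)"
      unfolding e1 by simp
    moreover have "(a * lam * (of_int k + 1) + b * (of_int k - 2 * halfp j)) * of_int k = \<alpha> * lam * (of_int k + 1) + \<beta> * (of_int k - 2 * halfp j)"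
      using kne by (simp add: a_def b_def field_simps)
    ultimately have e2: "v = a * lam * (of_int k + 1) + b * (of_int k - 2 * halfp j)" using kne by (metis mult_right_cancel)
    show "D (sgl (G j)) = bracket lam Y (sgl (G j))"
    proof
      fix c show "D (sgl (G j)) c = bracket lam Y (sgl (G j)) c"
        unfolding F Y_def by (simp add: br2) (simp add: e1 e2 sgl_def ac_simps algebra_simps)
    qed
  qed
  have cb: "\<And>bb. D (sgl bb) = bracket lam Y (sgl bb)"
    subgoal for bb by (cases bb) (simp_all only: cL cI cG cH)
    done
  show ?thesis
  proof (intro exI ballI)
    fix x assume x: "x \<in> Alg"
    have fx: "finite (supp x)" using x by (simp add: Alg_def)
    have "D x = D (\<lambda>c. \<Sum>b\<in>supp x. x b * sgl b c)" using Alg_decomp[OF x] by simp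
    also have "\<dots> = (\<lambda>c. \<Sum>b\<in>supp x. x b * D (sgl b) c)" by (rule D_sum[OF lin fx])
    also have "\<dots> = bracket lam Y x"
      by (rule ext, subst bracket_right_lin[of "{L k, I k}"]) (simp_all add: x Y_def supp2 cb)
    finally show "D x = bracket lam (\<lambda>c. a * sgl (L k) c + b * sgl (I k) c) x" unfolding Y_def .
  qed
qed
end
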